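(* Let $G$, $H$ be graphs with $n=|V(G)|$, $n'=|V(H)|$, $m=|E(G)|$, $m'=|E(H)|$, and let $k_V$, $k_E$ be vertex and edge kernels whose single evaluation takes time $\mathsf{T}_V$ and $\mathsf{T}_E$, respectively. Consider the following algorithm: for all $v\in V(G)$, $v'\in V(H)$, compute $w\gets k_V(v,v')$ and, if $w>0$, create a vertex $(v,v')$ of weight $w$; then, fixing an arbitrary total order $\prec$ on the created vertices, for every created vertex $(u,s)$ and all $v\in N(u)$, $t\in N(s)$ such that $(v,t)$ is a created vertex and $(u,s)\prec(v,t)$, compute $w\gets k_E(uv,st)$ and, if $w>0$, create the edge $(u,s)(v,t)$ of weight $w$. This algorithm computes the weighted direct product graph $G\times_w H$ in time $O(nn'\mathsf{T}_V+mm'\mathsf{T}_E)$.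
   Context: Graphs are finite and undirected; $N(v)$ denotes the neighborhood of $v$. The weighted direct product graph $G\times_w H=(\mathcal V,\mathcal E,w)$ is defined by $\mathcal V=\{(v,v')\in V(G)\times V(H): k_V(v,v')>0\}$, $\mathcal E=\{(u,u')(v,v'): (u,u'),(v,v')\in\mathcal V,\ uv\in E(G),\ u'v'\in E(H),\ k_E(uv,u'v')>0\}$, with weights $w((u,u'))=k_V(u,u')$ and $w((u,u')(v,v'))=k_E(uv,u'v')$. *)

theory Defs
  imports Complex_Main
begin

text \<open>A finite undirected simple graph: a finite vertex set and a set of edges,
  each edge being a 2-element subset of the vertex set (edge uv is the set {u,v}).\<close>
definition simple_graph :: "'a set \<Rightarrow> 'a set set \<Rightarrow> bool" where
  "simple_graph V E \<longleftrightarrow> finite V \<and> (\<forall>e\<in>E. e \<subseteq> V \<and> card e = 2)"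

definition nbhd :: "'a set set \<Rightarrow> 'a \<Rightarrow> 'a set" where
  "nbhd E u = {v. {u, v} \<in> E}"

definition adj_lists :: "'a set \<Rightarrow> 'a set set \<Rightarrow> ('a \<Rightarrow> 'a list) \<Rightarrow> bool" where
  "adj_lists V E NL \<longleftrightarrow> (\<forall>u\<in>V. distinct (NL u) \<and> set (NL u) = nbhd E u)"

definition dp_vertices :: "'a set \<Rightarrow> 'b set \<Rightarrow> ('a \<Rightarrow> 'b \<Rightarrow> real) \<Rightarrow> ('a \<times> 'b) set" where
  "dp_vertices VG VH kV = {(v, v'). v \<in> VG \<and> v' \<in> VH \<and> kV v v' > 0}"

definition dp_edges ::
  "'a set \<Rightarrow> 'a set set \<Rightarrow> 'b set \<Rightarrow> 'b set set \<Rightarrow> ('a \<Rightarrow> 'b \<Rightarrow> real)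
   \<Rightarrow> ('a set \<Rightarrow> 'b set \<Rightarrow> real) \<Rightarrow> ('a \<times> 'b) set set" where
  "dp_edges VG EG VH EH kV kE =
     {{(u, u'), (v, v')} | u u' v v'.
        (u, u') \<in> dp_vertices VG VH kV \<and> (v, v') \<in> dp_vertices VG VH kV \<and>
        {u, v} \<in> EG \<and> {u', v'} \<in> EH \<and> kE {u, v} {u', v'} > 0}"

text \<open>w((u,u')) = kV(u,u') and w((u,u')(v,v')) = kE(uv,u'v'); note that for
  e = {(u,u'),(v,v')} we have fst ` e = {u,v} = uv and snd ` e = {u',v'} = u'v'.\<close>
definition dp_vweight :: "('a \<Rightarrow> 'b \<Rightarrow> real) \<Rightarrow> 'a \<times> 'b \<Rightarrow> real" where
  "dp_vweight kV p = kV (fst p) (snd p)"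

definition dp_eweight :: "('a set \<Rightarrow> 'b set \<Rightarrow> real) \<Rightarrow> ('a \<times> 'b) set \<Rightarrow> real" where
  "dp_eweight kE e = kE (fst ` e) (snd ` e)"

definition represents_dp ::
  "'a set \<Rightarrow> 'a set set \<Rightarrow> 'b set \<Rightarrow> 'b set set \<Rightarrow> ('a \<Rightarrow> 'b \<Rightarrow> real)
   \<Rightarrow> ('a set \<Rightarrow> 'b set \<Rightarrow> real)
   \<Rightarrow> (('a \<times> 'b) \<times> real) list \<Rightarrow> (('a \<times> 'b) \<times> ('a \<times> 'b) \<times> real) list \<Rightarrow> bool" where
  "represents_dp VG EG VH EH kV kE vs es \<longleftrightarrow>
     distinct (map fst vs) \<and> set (map fst vs) = dp_vertices VG VH kV \<and>
     (\<forall>(p, w) \<in> set vs. w = dp_vweight kV p) \<and>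
     distinct (map (\<lambda>(p, q, w). {p, q}) es) \<and>
     set (map (\<lambda>(p, q, w). {p, q}) es) = dp_edges VG EG VH EH kV kE \<and>
     (\<forall>(p, q, w) \<in> set es. w = dp_eweight kE {p, q})"

text \<open>Cost model: one evaluation of kV costs TV, one evaluation of kE costs TE; every other
  elementary step (a loop iteration, a membership test of a candidate vertex among the created
  vertices, a comparison with respect to the order, creating a vertex/edge) costs 1.\<close>

definition vstep :: "('a \<Rightarrow> 'b \<Rightarrow> real) \<Rightarrow> real
    \<Rightarrow> (('a \<times> 'b) \<times> real) list \<times> real \<Rightarrow> 'a \<times> 'b \<Rightarrow> (('a \<times> 'b) \<times> real) list \<times> real" where
  "vstep kV TV st p =
     (let (vs, c) = st; w = kV (fst p) (snd p)
      in if 0 < w then (vs @ [(p, w)], c + TV + 2) else (vs, c + TV + 1))"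

definition vertex_phase :: "('a \<Rightarrow> 'b \<Rightarrow> real) \<Rightarrow> real \<Rightarrow> 'a list \<Rightarrow> 'b list
    \<Rightarrow> (('a \<times> 'b) \<times> real) list \<times> real" where
  "vertex_phase kV TV xs ys = foldl (vstep kV TV) ([], 0) (List.product xs ys)"

definition estep :: "('a set \<Rightarrow> 'b set \<Rightarrow> real) \<Rightarrow> real \<Rightarrow> ('a \<times> 'b) rel
    \<Rightarrow> ('a \<times> 'b) list \<Rightarrow> 'a \<times> 'b
    \<Rightarrow> (('a \<times> 'b) \<times> ('a \<times> 'b) \<times> real) list \<times> real \<Rightarrow> 'a \<times> 'b
    \<Rightarrow> (('a \<times> 'b) \<times> ('a \<times> 'b) \<times> real) list \<times> real" where
  "estep kE TE prec cv us st vt =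
     (let (es, c) = st
      in if vt \<in> set cv \<and> (us, vt) \<in> prec then
           (let w = kE {fst us, fst vt} {snd us, snd vt}
            in if 0 < w then (es @ [(us, vt, w)], c + TE + 3) else (es, c + TE + 2))
         else (es, c + 2))"

definition edge_phase :: "('a set \<Rightarrow> 'b set \<Rightarrow> real) \<Rightarrow> real
    \<Rightarrow> ('a \<Rightarrow> 'a list) \<Rightarrow> ('b \<Rightarrow> 'b list) \<Rightarrow> ('a \<times> 'b) rel \<Rightarrow> ('a \<times> 'b) list
    \<Rightarrow> (('a \<times> 'b) \<times> ('a \<times> 'b) \<times> real) list \<times> real" where
  "edge_phase kE TE NG NH prec cv =
     foldl (\<lambda>st us. let (es, c) = st in
              foldl (estep kE TE prec cv us) (es, c + 1)
                    (List.product (NG (fst us)) (NH (snd us))))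
           ([], 0) cv"

definition dp_algorithm :: "('a \<Rightarrow> 'b \<Rightarrow> real) \<Rightarrow> ('a set \<Rightarrow> 'b set \<Rightarrow> real) \<Rightarrow> real \<Rightarrow> real
    \<Rightarrow> 'a list \<Rightarrow> 'b list \<Rightarrow> ('a \<Rightarrow> 'a list) \<Rightarrow> ('b \<Rightarrow> 'b list) \<Rightarrow> ('a \<times> 'b) rel
    \<Rightarrow> (('a \<times> 'b) \<times> real) list \<times> (('a \<times> 'b) \<times> ('a \<times> 'b) \<times> real) list \<times> real" where
  "dp_algorithm kV kE TV TE xs ys NG NH prec =
     (let (vs, c1) = vertex_phase kV TV xs ys;
          (es, c2) = edge_phase kE TE NG NH prec (map fst vs)
      in (vs, es, c1 + c2))"

end

theory Submission
  imports Defs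
begin

definition vcost :: "('a \<Rightarrow> 'b \<Rightarrow> real) \<Rightarrow> real \<Rightarrow> 'a \<times> 'b \<Rightarrow> real" where
  "vcost kV TV p = (if 0 < kV (fst p) (snd p) then TV + 2 else TV + 1)"

lemma vfold:
  "foldl (vstep kV TV) (vs0, c0) L =
    (vs0 @ map (\<lambda>p. (p, kV (fst p) (snd p))) (filter (\<lambda>p. 0 < kV (fst p) (snd p)) L),
     c0 + sum_list (map (vcost kV TV) L))"
  by (induction L arbitrary: vs0 c0) (auto simp: vstep_def vcost_def algebra_simps)

definition epred where
  "epred kE prec cv us vt = (vt \<in> set cv \<and> (us, vt) \<in> prec \<and> 0 < kE {fst us, fst vt} {snd us, snd vt})"

definition ecost :: "('a set \<Rightarrow> 'b set \<Rightarrow> real) \<Rightarrow> real \<Rightarrow> ('a \<times> 'b) rel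
    \<Rightarrow> ('a \<times> 'b) list \<Rightarrow> 'a \<times> 'b \<Rightarrow> 'a \<times> 'b \<Rightarrow> real" where
  "ecost kE TE prec cv us vt = (if vt \<in> set cv \<and> (us, vt) \<in> prec then
     (if 0 < kE {fst us, fst vt} {snd us, snd vt} then TE + 3 else TE + 2) else 2)"

lemma efold:
  "foldl (estep kE TE prec cv us) (es0, c0) L =
    (es0 @ map (\<lambda>vt. (us, vt, kE {fst us, fst vt} {snd us, snd vt})) (filter (epred kE prec cv us) L),
     c0 + sum_list (map (ecost kE TE prec cv us) L))"
  by (induction L arbitrary: es0 c0) (auto simp: estep_def ecost_def epred_def algebra_simps Let_def)

lemma ofold:
  "foldl (\<lambda>st us. let (es, c) = st in
              foldl (estep kE TE prec cv us) (es, c + 1)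
                    (List.product (NG (fst us)) (NH (snd us)))) (es0, c0) U =
    (es0 @ concat (map (\<lambda>us. map (\<lambda>vt. (us, vt, kE {fst us, fst vt} {snd us, snd vt}))
         (filter (epred kE prec cv us) (List.product (NG (fst us)) (NH (snd us))))) U),
     c0 + sum_list (map (\<lambda>us. 1 + sum_list (map (ecost kE TE prec cv us)
         (List.product (NG (fst us)) (NH (snd us))))) U))"
  by (induction U arbitrary: es0 c0) (auto simp: efold algebra_simps)

lemma distinct_concat_pairs:
  "distinct xs \<Longrightarrow> (\<forall>x\<in>set xs. distinct (f x)) \<Longrightarrow> distinct (concat (map (\<lambda>x. map (Pair x) (f x)) xs))"
  by (induction xs) (auto simp: distinct_map inj_on_def)

lemma sum_list_le_len:
  "(\<forall>x\<in>set L. f x \<le> (B::real)) \<Longrightarrow> sum_list (map f L) \<le> real (length L) * B"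
  by (induction L) (auto simp: algebra_simps)

lemma sum_list_mono_real:
  "(\<forall>x\<in>set L. f x \<le> (g x::real)) \<Longrightarrow> sum_list (map f L) \<le> sum_list (map g L)"
  by (induction L) auto

lemma nbhd_sub: "simple_graph V E \<Longrightarrow> u \<in> V \<Longrightarrow> nbhd E u \<subseteq> V"
  unfolding simple_graph_def nbhd_def by auto

lemma finite_E: "simple_graph V E \<Longrightarrow> finite E"
proof -
  assume a: "simple_graph V E"
  then have "E \<subseteq> Pow V" unfolding simple_graph_def by auto
  moreover have "finite V" using a unfolding simple_graph_def by auto
  ultimately show ?thesis by (meson finite_Pow_iff finite_subset)
qed

lemma handshake:
  assumes g: "simple_graph V E"
  shows "(\<Sum>u\<in>V. real (card (nbhd E u))) \<le> 4 * real (card E)"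
proof -
  have fV: "finite V" using g unfolding simple_graph_def by auto
  have fN: "\<And>u. u \<in> V \<Longrightarrow> finite (nbhd E u)" using nbhd_sub[OF g] fV finite_subset by blast
  have fE: "finite E" using finite_E[OF g] .
  have "(\<Sum>u\<in>V. card (nbhd E u)) = card (Sigma V (nbhd E))"
    using card_SigmaI[OF fV, of "nbhd E"] fN by simp
  also have "\<dots> \<le> card (\<Union>e\<in>E. e \<times> e)"
  proof (rule card_mono)
    show "finite (\<Union>e\<in>E. e \<times> e)"
    proof (rule finite_subset)
      show "(\<Union>e\<in>E. e \<times> e) \<subseteq> V \<times> V" using g unfolding simple_graph_def by blast
      show "finite (V \<times> V)" using fV by simp
    qed
    show "Sigma V (nbhd E) \<subseteq> (\<Union>e\<in>E. e \<times> e)"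
      unfolding nbhd_def by auto
  qed
  also have "\<dots> \<le> (\<Sum>e\<in>E. card (e \<times> e))" by (rule card_UN_le[OF fE])
  also have "\<dots> = (\<Sum>e\<in>E. 4)"
    using g unfolding simple_graph_def by (intro sum.cong) (auto simp: card_cartesian_product)
  also have "\<dots> = 4 * card E" by simp
  finally have "real (\<Sum>u\<in>V. card (nbhd E u)) \<le> real (4 * card E)" by (simp only: of_nat_le_iff)
  then show ?thesis by simp
qed

theorem proposition8:
  "\<exists>C::real. \<forall>(VG::'a set) EG (VH::'b set) EH kV kE TV TE xs ys NG NH prec.
     simple_graph VG EG \<and> simple_graph VH EH \<and> 1 \<le> TV \<and> 1 \<le> TE \<and>
     distinct xs \<and> set xs = VG \<and> distinct ys \<and> set ys = VH \<and>
     adj_lists VG EG NG \<and> adj_lists VH EH NH \<and>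
     strict_linear_order_on (dp_vertices VG VH kV) prec \<longrightarrow>
     (case dp_algorithm kV kE TV TE xs ys NG NH prec of (vs, es, c) \<Rightarrow>
        represents_dp VG EG VH EH kV kE vs es \<and>
        c \<le> C * (real (card VG * card VH) * TV + real (card EG * card EH) * TE))"
proof (rule exI[of _ 100], intro allI impI)
  fix VG :: "'a set" and EG :: "'a set set" and VH :: "'b set" and EH :: "'b set set"
    and kV :: "'a \<Rightarrow> 'b \<Rightarrow> real" and kE :: "'a set \<Rightarrow> 'b set \<Rightarrow> real" and TV TE :: real
    and xs :: "'a list" and ys :: "'b list" and NG :: "'a \<Rightarrow> 'a list" and NH :: "'b \<Rightarrow> 'b list"
    and prec :: "('a \<times> 'b) rel"
  assume A: "simple_graph VG EG \<and> simple_graph VH EH \<and> 1 \<le> TV \<and> 1 \<le> TE \<and>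
     distinct xs \<and> set xs = VG \<and> distinct ys \<and> set ys = VH \<and>
     adj_lists VG EG NG \<and> adj_lists VH EH NH \<and>
     strict_linear_order_on (dp_vertices VG VH kV) prec"
  then have gG: "simple_graph VG EG" and gH: "simple_graph VH EH" and TV: "1 \<le> TV" and TE: "1 \<le> TE"
    and dx: "distinct xs" and sx: "set xs = VG" and dy: "distinct ys" and sy: "set ys = VH"
    and aG: "adj_lists VG EG NG" and aH: "adj_lists VH EH NH"
    and so: "strict_linear_order_on (dp_vertices VG VH kV) prec" by auto
  define pos where "pos = (\<lambda>p. 0 < kV (fst p) (snd p))"
  define vs where "vs = map (\<lambda>p. (p, kV (fst p) (snd p))) (filter pos (List.product xs ys))"
  define c1 where "c1 = sum_list (map (vcost kV TV) (List.product xs ys))"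
  have vp: "vertex_phase kV TV xs ys = (vs, c1)"
    unfolding vertex_phase_def vs_def c1_def pos_def by (simp add: vfold)
  define cv where "cv = map fst vs"
  have cv_eq: "cv = filter pos (List.product xs ys)" unfolding cv_def vs_def by (simp add: comp_def)
  have dcv: "distinct cv" unfolding cv_eq using dx dy by (simp add: distinct_product)
  have scv: "set cv = dp_vertices VG VH kV"
    unfolding cv_eq dp_vertices_def pos_def using sx sy by auto
  define inner where "inner = (\<lambda>us::'a\<times>'b. List.product (NG (fst us)) (NH (snd us)))"
  define F where "F = (\<lambda>us. filter (epred kE prec cv us) (inner us))"
  define es where "es = concat (map (\<lambda>us. map (\<lambda>vt. (us, vt, kE {fst us, fst vt} {snd us, snd vt})) (F us)) cv)"
  define c2 where "c2 = sum_list (map (\<lambda>us. 1 + sum_list (map (ecost kE TE prec cv us) (inner us))) cv)"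
  have ep: "edge_phase kE TE NG NH prec cv = (es, c2)"
    unfolding edge_phase_def es_def c2_def F_def inner_def using ofold[of kE TE prec cv NG NH "[]" 0 cv]
    by simp
  have alg: "dp_algorithm kV kE TV TE xs ys NG NH prec = (vs, es, c1 + c2)"
    unfolding dp_algorithm_def using vp ep cv_def by simp
  have sinner: "\<And>us. us \<in> set cv \<Longrightarrow> set (inner us) = nbhd EG (fst us) \<times> nbhd EH (snd us)"
    using aG aH scv unfolding inner_def adj_lists_def dp_vertices_def by auto
  have dinner: "\<And>us. us \<in> set cv \<Longrightarrow> distinct (inner us)"
    using aG aH scv unfolding inner_def adj_lists_def dp_vertices_def by (auto simp: distinct_product)
  define PL where "PL = concat (map (\<lambda>us. map (Pair us) (F us)) cv)"
  have dPL: "distinct PL" unfolding PL_def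
    by (rule distinct_concat_pairs[OF dcv]) (simp add: F_def dinner)
  have sPL: "set PL = {(p, q). p \<in> set cv \<and> q \<in> set (inner p) \<and> epred kE prec cv p q}"
    unfolding PL_def F_def by auto
  have esPL: "map (\<lambda>(p, q, w). {p, q}) es = map (\<lambda>(p, q). {p, q}) PL"
    unfolding es_def PL_def by (simp add: map_concat comp_def)
  have irr: "\<And>p. p \<in> set cv \<Longrightarrow> (p, p) \<notin> prec" using so scv
    unfolding strict_linear_order_on_def irrefl_on_def by auto
  have tr: "trans prec" using so unfolding strict_linear_order_on_def by auto
  have tot: "\<And>p q. p \<in> set cv \<Longrightarrow> q \<in> set cv \<Longrightarrow> p \<noteq> q \<Longrightarrow> (p, q) \<in> prec \<or> (q, p) \<in> prec"
    using so scv unfolding strict_linear_order_on_def total_on_def by auto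
  have inj: "inj_on (\<lambda>(p, q). {p, q}) (set PL)"
  proof (rule inj_onI, clarify)
    fix p q p' q'
    assume 1: "(p, q) \<in> set PL" "(p', q') \<in> set PL" "{p, q} = {p', q'}"
    show "p = p' \<and> q = q'"
    proof (cases "p = p'")
      case True then show ?thesis using 1(3) by (metis doubleton_eq_iff)
    next
      case False
      then have "p = q'" "q = p'" using 1(3) by (metis doubleton_eq_iff)+
      then have "(p, q) \<in> prec" "(q, p) \<in> prec" using 1 sPL unfolding epred_def by auto
      then have "(p, p) \<in> prec" using tr by (meson transD)
      moreover have "p \<in> set cv" using 1 sPL by auto
      ultimately show ?thesis using irr by blast
    qed
  qed
  have dist_es: "distinct (map (\<lambda>(p, q, w). {p, q}) es)"
    unfolding esPL using dPL inj by (simp add: distinct_map)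
  have set_es: "set (map (\<lambda>(p, q, w). {p, q}) es) = dp_edges VG EG VH EH kV kE"
  proof -
    have "set (map (\<lambda>(p, q, w). {p, q}) es) = (\<lambda>(p, q). {p, q}) ` set PL"
      unfolding esPL by simp
    also have "\<dots> = dp_edges VG EG VH EH kV kE"
    proof
      show "(\<lambda>(p, q). {p, q}) ` set PL \<subseteq> dp_edges VG EG VH EH kV kE"
      proof clarify
        fix p q assume "(p, q) \<in> set PL"
        then have "p \<in> set cv" "q \<in> set (inner p)" "epred kE prec cv p q" using sPL by auto
        then show "{p, q} \<in> dp_edges VG EG VH EH kV kE"
        proof -
          assume h: "p \<in> set cv" "q \<in> set (inner p)" "epred kE prec cv p q"
          obtain u u' v v' where pq: "p = (u, u')" "q = (v, v')" by (cases p, cases q) auto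
          have "v \<in> nbhd EG u" "v' \<in> nbhd EH u'" using h(2) sinner[OF h(1)] pq by auto
          then have "{u, v} \<in> EG" "{u', v'} \<in> EH" unfolding nbhd_def by auto
          moreover have "(u, u') \<in> dp_vertices VG VH kV" "(v, v') \<in> dp_vertices VG VH kV"
            "kE {u, v} {u', v'} > 0"
            using h(1,3) scv pq unfolding epred_def by auto
          ultimately show ?thesis unfolding dp_edges_def pq by blast
        qed
      qed
    next
      show "dp_edges VG EG VH EH kV kE \<subseteq> (\<lambda>(p, q). {p, q}) ` set PL"
      proof
        fix e assume "e \<in> dp_edges VG EG VH EH kV kE"
        then obtain u u' v v' where e: "e = {(u, u'), (v, v')}" and
          pv: "(u, u') \<in> set cv" "(v, v') \<in> set cv" and
          eG: "{u, v} \<in> EG" and eH: "{u', v'} \<in> EH" and k: "kE {u, v} {u', v'} > 0"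
          unfolding dp_edges_def scv by blast
        have "card {u, v} = 2" using eG gG unfolding simple_graph_def by blast
        then have "u \<noteq> v" by (cases "u = v") auto
        then have ne: "(u, u') \<noteq> (v, v')" by simp
        have m1: "((u, u'), (v, v')) \<in> prec \<Longrightarrow> ((u, u'), (v, v')) \<in> set PL"
          using pv eG eH k sinner unfolding sPL epred_def nbhd_def by auto
        have m2: "((v, v'), (u, u')) \<in> prec \<Longrightarrow> ((v, v'), (u, u')) \<in> set PL"
          using pv eG eH k sinner unfolding sPL epred_def nbhd_def by (auto simp: insert_commute)
        show "e \<in> (\<lambda>(p, q). {p, q}) ` set PL"
          using tot[OF pv ne] m1 m2 e by (auto simp: insert_commute image_iff)
      qed
    qed
    finally show ?thesis .
  qed
  have rep: "represents_dp VG EG VH EH kV kE vs es"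
    unfolding represents_dp_def
  proof (intro conjI)
    show "distinct (map fst vs)" using dcv cv_def by simp
    show "set (map fst vs) = dp_vertices VG VH kV" using scv cv_def by simp
    show "\<forall>(p, w)\<in>set vs. w = dp_vweight kV p" unfolding vs_def dp_vweight_def by auto
    show "distinct (map (\<lambda>(p, q, w). {p, q}) es)" by (rule dist_es)
    show "set (map (\<lambda>(p, q, w). {p, q}) es) = dp_edges VG EG VH EH kV kE" by (rule set_es)
    show "\<forall>(p, q, w)\<in>set es. w = dp_eweight kE {p, q}" unfolding es_def dp_eweight_def by auto
  qed
  define n where "n = real (card VG * card VH)"
  define m where "m = real (card EG * card EH)"
  have lenp: "real (length (List.product xs ys)) = n"
    unfolding n_def using dx dy sx sy by (simp add: distinct_card[symmetric])
  have c1b: "c1 \<le> n * (TV + 2)"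
    unfolding c1_def using sum_list_le_len[of "List.product xs ys" "vcost kV TV" "TV + 2"] lenp
    by (simp add: vcost_def)
  define g where "g = (\<lambda>us::'a\<times>'b. 1 + real (card (nbhd EG (fst us))) * real (card (nbhd EH (snd us))) * (TE + 3))"
  have c2a: "c2 \<le> sum_list (map g cv)"
    unfolding c2_def
  proof (rule sum_list_mono_real, intro ballI)
    fix us assume us: "us \<in> set cv"
    have "sum_list (map (ecost kE TE prec cv us) (inner us)) \<le> real (length (inner us)) * (TE + 3)"
      by (rule sum_list_le_len) (use TE in \<open>simp add: ecost_def\<close>)
    moreover have "length (inner us) = card (nbhd EG (fst us)) * card (nbhd EH (snd us))"
      using distinct_card[OF dinner[OF us]] sinner[OF us] by (simp add: card_cartesian_product)
    ultimately show "1 + sum_list (map (ecost kE TE prec cv us) (inner us)) \<le> g us"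
      unfolding g_def by simp
  qed
  have fG: "finite VG" and fH: "finite VH" using gG gH unfolding simple_graph_def by auto
  have "sum_list (map g cv) = sum g (set cv)" using dcv by (simp add: sum_list_distinct_conv_sum_set)
  also have "\<dots> \<le> sum g (VG \<times> VH)"
  proof (rule sum_mono2)
    show "finite (VG \<times> VH)" using fG fH by simp
    show "set cv \<subseteq> VG \<times> VH" using scv unfolding dp_vertices_def by auto
    show "\<And>b. b \<in> VG \<times> VH - set cv \<Longrightarrow> 0 \<le> g b" unfolding g_def using TE by simp
  qed
  also have "\<dots> = n + (TE + 3) * ((\<Sum>u\<in>VG. real (card (nbhd EG u))) * (\<Sum>s\<in>VH. real (card (nbhd EH s))))"
  proof -
    define a where "a = (\<lambda>u. real (card (nbhd EG u)))"
    define b where "b = (\<lambda>s. real (card (nbhd EH s)))"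
    have "sum g (VG \<times> VH) = (\<Sum>p\<in>VG \<times> VH. 1 + (TE + 3) * (a (fst p) * b (snd p)))"
      unfolding g_def a_def b_def by (simp add: algebra_simps)
    also have "\<dots> = real (card (VG \<times> VH)) + (TE + 3) * (\<Sum>p\<in>VG \<times> VH. a (fst p) * b (snd p))"
      by (simp add: sum.distrib sum_distrib_left)
    also have "(\<Sum>p\<in>VG \<times> VH. a (fst p) * b (snd p)) = (\<Sum>u\<in>VG. \<Sum>s\<in>VH. a u * b s)"
      by (simp add: sum.cartesian_product split_def)
    also have "\<dots> = sum a VG * sum b VH" by (simp add: sum_product)
    finally show ?thesis unfolding n_def a_def b_def by (simp add: card_cartesian_product)
  qed
  also have "\<dots> \<le> n + (TE + 3) * ((4 * real (card EG)) * (4 * real (card EH)))"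
    using handshake[OF gG] handshake[OF gH] TE
    by (intro add_left_mono mult_left_mono mult_mono) (auto intro: sum_nonneg)
  also have "\<dots> = n + 16 * m * (TE + 3)" unfolding m_def by simp
  finally have c2b: "c2 \<le> n + 16 * m * (TE + 3)" using c2a by linarith
  have n0: "0 \<le> n" and m0: "0 \<le> m" unfolding n_def m_def by auto
  have "c1 + c2 \<le> 100 * (n * TV + m * TE)"
  proof -
    have "n * 3 \<le> n * (3 * TV)" using n0 TV by (intro mult_left_mono) auto
    moreover have "m * 3 \<le> m * (3 * TE)" using m0 TE by (intro mult_left_mono) auto
    moreover have "0 \<le> n * TV" "0 \<le> m * TE" using n0 m0 TV TE by auto
    ultimately show ?thesis using c1b c2b by (simp add: algebra_simps)
  qed
  then show "case dp_algorithm kV kE TV TE xs ys NG NH prec of (vs, es, c) \<Rightarrow>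
        represents_dp VG EG VH EH kV kE vs es \<and>
        c \<le> 100 * (real (card VG * card VH) * TV + real (card EG * card EH) * TE)"
    using alg rep unfolding n_def m_def by simp
qed

end
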